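(* Let $f:\mathbb{R}\to\mathbb{R}$ be a concave function such that $f(0)=0$, $f$ is differentiable at $0$, $f'(0)\neq 0$, $\sup_x f(x)=M>0$, and $\operatorname{argsup}_x f(x)>0$. Let $\mathbb{P}$ and $\mathbb{Q}$ be probability distributions with support $\mathcal{X}$, and let $\mathbb{M}=\frac12\mathbb{P}+\frac12\mathbb{Q}$. Define $$\mathrm{D}^{Rp}_f(\mathbb{P},\mathbb{Q})=\sup_{C:\mathcal{X}\to\mathbb{R}} 2\,\mathbb{E}_{x\sim\mathbb{P},\,y\sim\mathbb{Q}}\big[f(C(x)-C(y))\big],$$ $$\mathrm{D}^{Ra}_f(\mathbb{P},\mathbb{Q})=\sup_{C:\mathcal{X}\to\mathbb{R}} \mathbb{E}_{x\sim\mathbb{P}}\Big[f\big(C(x)-\mathbb{E}_{y\sim\mathbb{Q}}C(y)\big)\Big]+\mathbb{E}_{y\sim\mathbb{Q}}\Big[f\big(\mathbb{E}_{x\sim\mathbb{P}}C(x)-C(y)\big)\Big],$$ $$\mathrm{D}^{Ralf}_f(\mathbb{P},\mathbb{Q})=\sup_{C:\mathcal{X}\to\mathbb{R}} 2\,\mathbb{E}_{x\sim\mathbb{P}}\Big[f\big(C(x)-\mathbb{E}_{y\sim\mathbb{Q}}C(y)\big)\Big],$$ $$\mathrm{D}^{Rc}_f(\mathbb{P},\mathbb{Q})=\sup_{C:\mathcal{X}\to\mathbb{R}} \mathbb{E}_{x\sim\mathbb{P}}\Big[f\big(C(x)-\mathbb{E}_{m\sim\mathbb{M}}C(m)\big)\Big]+\mathbb{E}_{y\sim\mathbb{Q}}\Big[f\big(\mathbb{E}_{m\sim\mathbb{M}}C(m)-C(y)\big)\Big].$$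 Then $\mathrm{D}^{Rp}_f$, $\mathrm{D}^{Ra}_f$, $\mathrm{D}^{Ralf}_f$ and $\mathrm{D}^{Rc}_f$ are divergences.
   Context: The suprema range over (measurable) critic functions $C:\mathcal{X}\to\mathbb{R}$ for which the expectations are defined. A function $D$ assigning a real number to each pair of probability distributions on a common support is a divergence if for all $\mathbb{P},\mathbb{Q}$: $D(\mathbb{P},\mathbb{Q})\ge 0$, and $D(\mathbb{P},\mathbb{Q})=0$ if and only if $\mathbb{P}=\mathbb{Q}$. The condition $\operatorname{argsup}_x f(x)>0$ means the supremum of $f$ is reached at some positive $x$ (or approached as $x\to+\infty$). *)

theory Defs
  imports "HOL-Probability.Probability"
begin

text \<open>Critic functions C range over measurable functions
  for which all the expectations occurring in the objective exist (are integrable).\<close>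

definition DRp :: "(real \<Rightarrow> real) \<Rightarrow> 'a measure \<Rightarrow> 'a measure \<Rightarrow> real" where
  "DRp f P Q =
    (SUP C \<in> {C. C \<in> borel_measurable P \<and>
                 integrable (P \<Otimes>\<^sub>M Q) (\<lambda>(x, y). f (C x - C y))}.
       2 * (\<integral>(x, y). f (C x - C y) \<partial>(P \<Otimes>\<^sub>M Q)))"

definition DRa :: "(real \<Rightarrow> real) \<Rightarrow> 'a measure \<Rightarrow> 'a measure \<Rightarrow> real" where
  "DRa f P Q =
    (SUP C \<in> {C. C \<in> borel_measurable P \<and> integrable P C \<and> integrable Q C \<and>
                 integrable P (\<lambda>x. f (C x - (\<integral>y. C y \<partial>Q))) \<and>
                 integrable Q (\<lambda>y. f ((\<integral>x. C x \<partial>P) - C y))}.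
       (\<integral>x. f (C x - (\<integral>y. C y \<partial>Q)) \<partial>P) + (\<integral>y. f ((\<integral>x. C x \<partial>P) - C y) \<partial>Q))"

definition DRalf :: "(real \<Rightarrow> real) \<Rightarrow> 'a measure \<Rightarrow> 'a measure \<Rightarrow> real" where
  "DRalf f P Q =
    (SUP C \<in> {C. C \<in> borel_measurable P \<and> integrable Q C \<and>
                 integrable P (\<lambda>x. f (C x - (\<integral>y. C y \<partial>Q)))}.
       2 * (\<integral>x. f (C x - (\<integral>y. C y \<partial>Q)) \<partial>P))"

definition mix_mean :: "'a measure \<Rightarrow> 'a measure \<Rightarrow> ('a \<Rightarrow> real) \<Rightarrow> real" where
  "mix_mean P Q C = (1/2) * (\<integral>x. C x \<partial>P) + (1/2) * (\<integral>y. C y \<partial>Q)"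

definition DRc :: "(real \<Rightarrow> real) \<Rightarrow> 'a measure \<Rightarrow> 'a measure \<Rightarrow> real" where
  "DRc f P Q =
    (SUP C \<in> {C. C \<in> borel_measurable P \<and> integrable P C \<and> integrable Q C \<and>
                 integrable P (\<lambda>x. f (C x - mix_mean P Q C)) \<and>
                 integrable Q (\<lambda>y. f (mix_mean P Q C - C y))}.
       (\<integral>x. f (C x - mix_mean P Q C) \<partial>P) + (\<integral>y. f (mix_mean P Q C - C y) \<partial>Q))"

definition is_divergence_on :: "'a measure \<Rightarrow> ('a measure \<Rightarrow> 'a measure \<Rightarrow> real) \<Rightarrow> bool" where
  "is_divergence_on X D \<longleftrightarrow>
     (\<forall>P Q. prob_space P \<longrightarrow> prob_space Q \<longrightarrow> sets P = sets X \<longrightarrow> sets Q = sets X \<longrightarrow>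
        D P Q \<ge> 0 \<and> (D P Q = 0 \<longleftrightarrow> P = Q))"

end

theory Submission
  imports Defs
begin


lemma pos_somewhere:
  fixes g :: "real \<Rightarrow> real"
  assumes "(g has_real_derivative d) (at 0)" "d \<noteq> 0" "g 0 = 0"
  shows "\<exists>t. g t > 0"
proof (cases "d > 0")
  case True
  from DERIV_pos_inc_right[OF assms(1) True] obtain e where "e > 0" "\<forall>h>0. h < e \<longrightarrow> g 0 < g (0 + h)" by blast
  then have "g 0 < g (e/2)" by auto
  then show ?thesis using assms(3) by auto
next
  case False
  then have "d < 0" using assms(2) by linarith
  from DERIV_neg_dec_left[OF assms(1) this] obtain e where "e > 0" "\<forall>h>0. h < e \<longrightarrow> g 0 < g (0 - h)" by blast
  then have "g 0 < g (0 - e/2)" by auto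
  then show ?thesis using assms(3) by auto
qed

lemma deriv_scale:
  fixes f :: "real \<Rightarrow> real"
  assumes "(f has_real_derivative a) (at 0)"
  shows "((\<lambda>t. f (k * t)) has_real_derivative (a * k)) (at 0)"
proof -
  have "((\<lambda>t. k * t) has_real_derivative k) (at 0)" by (auto intro!: derivative_eq_intros)
  moreover have "(f has_real_derivative a) (at (k * 0))" using assms by simp
  ultimately show ?thesis using DERIV_chain2 by blast
qed

lemma concave_sym:
  fixes f :: "real \<Rightarrow> real"
  assumes "concave_on UNIV f" "f 0 = 0"
  shows "f z + f (- z) \<le> 0"
proof -
  have "f ((1 - 1/2) *\<^sub>R z + (1/2) *\<^sub>R (-z)) \<ge> (1 - 1/2) * f z + (1/2) * f (-z)"
    by (rule concave_onD[OF assms(1)]) auto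
  then show ?thesis using assms(2) by simp
qed

lemma concave_tangent:
  fixes f :: "real \<Rightarrow> real"
  assumes "concave_on UNIV f" "f 0 = 0" "(f has_real_derivative a) (at 0)"
  shows "f z \<le> a * z"
proof (rule ccontr)
  assume "\<not> ?thesis"
  define g where "g s = f (z * s) - s * f z" for s
  have "(g has_real_derivative (a * z - f z)) (at 0)"
    unfolding g_def by (auto intro!: derivative_eq_intros deriv_scale[OF assms(3)])
  from DERIV_neg_dec_right[OF this] \<open>\<not> ?thesis\<close>
  obtain e where "e > 0" "\<forall>h>0. h < e \<longrightarrow> g 0 > g (0 + h)" by force
  then have "g (min (e/2) 1) < g 0" by auto
  moreover have "g 0 = 0" using assms(2) by (simp add: g_def)
  moreover have "f ((1 - min (e/2) 1) *\<^sub>R 0 + (min (e/2) 1) *\<^sub>R z) \<ge> (1 - min (e/2) 1) * f 0 + (min (e/2) 1) * f z"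
    by (rule concave_onD[OF assms(1)]) (use \<open>e>0\<close> in auto)
  ultimately show False using assms(2) by (simp add: g_def mult.commute)
qed

lemma sup_div:
  fixes V :: "'c \<Rightarrow> real"
  assumes "\<And>C. C \<in> S \<Longrightarrow> V C \<le> B" "cz \<in> S" "V cz = 0"
    "P = Q \<Longrightarrow> \<forall>C\<in>S. V C \<le> 0" "P \<noteq> Q \<Longrightarrow> \<exists>C\<in>S. V C > 0"
  shows "(SUP C\<in>S. V C) \<ge> 0 \<and> ((SUP C\<in>S. V C) = 0 \<longleftrightarrow> P = Q)"
proof -
  have bdd: "bdd_above (V ` S)" using assms(1) by (rule bdd_aboveI2)
  have ge: "(SUP C\<in>S. V C) \<ge> 0" using cSUP_upper[OF assms(2) bdd] assms(3) by simp
  show ?thesis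
  proof (cases "P = Q")
    case True
    then have "(SUP C\<in>S. V C) \<le> 0" using assms(4) assms(2) by (auto intro!: cSUP_least)
    then show ?thesis using ge True by auto
  next
    case False
    then obtain C where "C \<in> S" "V C > 0" using assms(5) by auto
    then have "(SUP C\<in>S. V C) > 0" using cSUP_upper[OF _ bdd, of C] by auto
    then show ?thesis using False by auto
  qed
qed

lemma ind_int:
  fixes F :: "real \<Rightarrow> real"
  assumes "prob_space M" "A \<in> sets M"
  shows "integrable M (\<lambda>x. F (indicator A x)) \<and>
    (\<integral>x. F (indicator A x) \<partial>M) = F 0 + (F 1 - F 0) * measure M A"
proof -
  have eq: "(\<lambda>x. F (indicator A x)) = (\<lambda>x. F 0 + (F 1 - F 0) * indicator A x)"
    by (auto simp: indicator_def)
  interpret prob_space M by fact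
  have i1: "integrable M (indicator A :: 'a \<Rightarrow> real)" using assms(2) by (intro integrable_real_indicator) (auto simp: emeasure_eq_measure)
  have i2: "integrable M (\<lambda>x. (F 1 - F 0) * indicator A x)" using i1 by auto
  have "(\<integral>x. F 0 + (F 1 - F 0) * indicator A x \<partial>M) = (\<integral>x. F 0 \<partial>M) + (\<integral>x. (F 1 - F 0) * indicator A x \<partial>M)"
    using i2 by (intro Bochner_Integration.integral_add) auto
  also have "\<dots> = F 0 + (F 1 - F 0) * measure M A"
    using assms(2) by (simp add: prob_space Int_absorb1 sets.sets_into_space)
  finally show ?thesis unfolding eq using i2 by auto
qed

lemma meas_neq:
  assumes "prob_space P" "prob_space Q" "sets P = sets Q" "P \<noteq> Q"
  shows "\<exists>A\<in>sets P. measure P A \<noteq> measure Q A"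
proof (rule ccontr)
  assume "\<not> ?thesis"
  then have "\<And>A. A \<in> sets P \<Longrightarrow> emeasure P A = emeasure Q A"
    using assms(1,2,3) by (metis finite_measure.emeasure_eq_measure prob_space.axioms(1) sets_eq_imp_space_eq)
  then have "P = Q" using measure_eqI[OF assms(3)] by blast
  then show False using assms(4) by simp
qed



lemma measure_rect:
  assumes pP: "prob_space P" and pQ: "prob_space Q" and A: "A \<in> sets P" and B: "B \<in> sets Q"
  shows "measure (P \<Otimes>\<^sub>M Q) (A \<times> B) = measure P A * measure Q B"
proof -
  interpret Q: sigma_finite_measure Q using pQ by (rule prob_space_imp_sigma_finite)
  have "emeasure (P \<Otimes>\<^sub>M Q) (A \<times> B) = emeasure P A * emeasure Q B"
    using Q.emeasure_pair_measure_Times[OF A B] .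
  also have "\<dots> = ennreal (measure P A) * ennreal (measure Q B)"
    using pP pQ by (simp add: prob_space_def finite_measure.emeasure_eq_measure)
  also have "\<dots> = ennreal (measure P A * measure Q B)"
    by (simp add: ennreal_mult)
  finally show ?thesis by (simp add: measure_def)
qed



lemma pair_ind:
  fixes F :: "real \<Rightarrow> real \<Rightarrow> real"
  assumes pP: "prob_space P" and pQ: "prob_space Q" and sPQ: "sets P = sets Q" and A: "A \<in> sets P"
    and F00: "F 0 0 = 0" and F11: "F 1 1 = 0"
  shows "integrable (P \<Otimes>\<^sub>M Q) (\<lambda>(x,y). F (indicator A x) (indicator A y)) \<and>
    (\<integral>(x,y). F (indicator A x) (indicator A y) \<partial>(P \<Otimes>\<^sub>M Q)) =
      F 1 0 * (measure P A * (1 - measure Q A)) + F 0 1 * ((1 - measure P A) * measure Q A)"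
proof -
  have sp: "space Q = space P" using sPQ by (rule sets_eq_imp_space_eq[symmetric])
  define \<Omega> where "\<Omega> = space P"
  have AQ: "A \<in> sets Q" using A sPQ by simp
  have cP: "\<Omega> - A \<in> sets P" using A unfolding \<Omega>_def by auto
  have cQ: "\<Omega> - A \<in> sets Q" using AQ sp unfolding \<Omega>_def by (metis sets.compl_sets)
  define R1 where "R1 = A \<times> (\<Omega> - A)"
  define R2 where "R2 = (\<Omega> - A) \<times> A"
  have R1s: "R1 \<in> sets (P \<Otimes>\<^sub>M Q)" unfolding R1_def using A cQ by auto
  have R2s: "R2 \<in> sets (P \<Otimes>\<^sub>M Q)" unfolding R2_def using AQ cP by auto
  have ppq: "prob_space (P \<Otimes>\<^sub>M Q)" using pP pQ by (rule prob_space_pair)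
  have fin: "emeasure (P \<Otimes>\<^sub>M Q) R < \<infinity>" for R
    using ppq by (simp add: prob_space_def finite_measure.emeasure_eq_measure)
  define h where "h z = F 1 0 * indicator R1 z + F 0 1 * indicator R2 z" for z
  have eq: "(\<lambda>(x,y). F (indicator A x) (indicator A y)) z = h z" if "z \<in> space (P \<Otimes>\<^sub>M Q)" for z
    using that A F00 F11 sets.sets_into_space[OF A]
    by (cases "fst z \<in> A"; cases "snd z \<in> A") (auto simp: h_def R1_def R2_def \<Omega>_def space_pair_measure indicator_def sp)
  have ih: "integrable (P \<Otimes>\<^sub>M Q) h"
    unfolding h_def using R1s R2s fin by (intro Bochner_Integration.integrable_add integrable_mult_right integrable_real_indicator) auto
  have "integral\<^sup>L (P \<Otimes>\<^sub>M Q) h = F 1 0 * measure (P \<Otimes>\<^sub>M Q) R1 + F 0 1 * measure (P \<Otimes>\<^sub>M Q) R2"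
    unfolding h_def using R1s R2s fin
    by (subst Bochner_Integration.integral_add) (auto intro!: integrable_real_indicator simp: Int_absorb2 sets.sets_into_space)
  also have "measure (P \<Otimes>\<^sub>M Q) R1 = measure P A * (1 - measure Q A)"
    unfolding R1_def using measure_rect[OF pP pQ A cQ] prob_space.prob_compl[OF pQ AQ] sp
    by (simp add: \<Omega>_def)
  also have "measure (P \<Otimes>\<^sub>M Q) R2 = (1 - measure P A) * measure Q A"
    unfolding R2_def using measure_rect[OF pP pQ cP AQ] prob_space.prob_compl[OF pP A]
    by (simp add: \<Omega>_def)
  finally have I: "integral\<^sup>L (P \<Otimes>\<^sub>M Q) h = F 1 0 * (measure P A * (1 - measure Q A)) + F 0 1 * ((1 - measure P A) * measure Q A)" .
  have e1: "integrable (P \<Otimes>\<^sub>M Q) (\<lambda>(x,y). F (indicator A x) (indicator A y)) \<longleftrightarrow> integrable (P \<Otimes>\<^sub>M Q) h"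
    using eq by (intro Bochner_Integration.integrable_cong) auto
  have e2: "(\<integral>(x,y). F (indicator A x) (indicator A y) \<partial>(P \<Otimes>\<^sub>M Q)) = integral\<^sup>L (P \<Otimes>\<^sub>M Q) h"
    using eq by (intro Bochner_Integration.integral_cong) auto
  show ?thesis using e1 e2 I ih by simp
qed



lemma DRa_div:
  fixes f :: "real \<Rightarrow> real" and P Q :: "'a measure"
  assumes conc: "concave_on UNIV f" and f0: "f 0 = 0" and der: "(f has_real_derivative a) (at 0)"
    and a0: "a \<noteq> 0" and fB: "\<And>x. f x \<le> B"
    and pP: "prob_space P" and pQ: "prob_space Q" and sPQ: "sets P = sets Q"
  shows "DRa f P Q \<ge> 0 \<and> (DRa f P Q = 0 \<longleftrightarrow> P = Q)"
  unfolding DRa_def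
proof (rule sup_div[where B = "B + B" and cz = "\<lambda>x. 0"], goal_cases)
  case (1 C)
  have "(\<integral>x. f (C x - (\<integral>y. C y \<partial>Q)) \<partial>P) \<le> B"
    using 1 fB by (intro prob_space.integral_le_const[OF pP]) auto
  moreover have "(\<integral>y. f ((\<integral>x. C x \<partial>P) - C y) \<partial>Q) \<le> B"
    using 1 fB by (intro prob_space.integral_le_const[OF pQ]) auto
  ultimately show ?case by linarith
next
  case 2
  then show ?case using f0 by auto
next
  case 3
  then show ?case using f0 by auto
next
  case 4
  show ?case
  proof
    fix C assume C: "C \<in> {C. C \<in> borel_measurable P \<and> integrable P C \<and> integrable Q C \<and>
                 integrable P (\<lambda>x. f (C x - (\<integral>y. C y \<partial>Q))) \<and>
                 integrable Q (\<lambda>y. f ((\<integral>x. C x \<partial>P) - C y))}"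
    define m where "m = (\<integral>x. C x \<partial>P)"
    have i1: "integrable P (\<lambda>x. f (C x - m))" and i2: "integrable P (\<lambda>x. f (m - C x))"
      using C 4 by (auto simp: m_def)
    have "(\<integral>x. f (C x - m) \<partial>P) + (\<integral>x. f (m - C x) \<partial>P) = (\<integral>x. f (C x - m) + f (m - C x) \<partial>P)"
      using i1 i2 by simp
    also have "\<dots> \<le> 0"
      using concave_sym[OF conc f0, of "C _ - m"]
      by (intro prob_space.integral_le_const[OF pP]) (use i1 i2 in auto)
    finally show "(\<integral>x. f (C x - (\<integral>y. C y \<partial>Q)) \<partial>P) + (\<integral>y. f ((\<integral>x. C x \<partial>P) - C y) \<partial>Q) \<le> 0"
      using 4 by (simp add: m_def)
  qed
next
  case 5
  obtain A where A: "A \<in> sets P" and pq: "measure P A \<noteq> measure Q A"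
    using meas_neq[OF pP pQ sPQ 5] by blast
  have AQ: "A \<in> sets Q" using A sPQ by simp
  define p where "p = measure P A"
  define q where "q = measure Q A"
  define g where "g t = f ((-q)*t) + (f ((1-q)*t) - f ((-q)*t))*p + f (p*t) + (f ((p-1)*t) - f (p*t))*q" for t
  have d1: "((\<lambda>t. f (k*t)) has_real_derivative (a*k)) (at 0)" for k using deriv_scale[OF der] .
  have "(g has_real_derivative (a*(-q) + (a*(1-q) - a*(-q))*p + a*p + (a*(p-1) - a*p)*q)) (at 0)"
    unfolding g_def
    by (intro DERIV_add DERIV_cmult_right DERIV_diff d1)
  moreover have "a*(-q) + (a*(1-q) - a*(-q))*p + a*p + (a*(p-1) - a*p)*q = 2*a*(p-q)"
    by (simp add: algebra_simps)
  moreover have "2*a*(p-q) \<noteq> 0" using a0 pq by (simp add: p_def q_def)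
  moreover have "g 0 = 0" using f0 by (simp add: g_def)
  ultimately obtain t where t: "g t > 0" using pos_somewhere by metis
  define C where "C x = t * indicator A x" for x
  have [measurable]: "A \<in> sets P" by fact
  have Cm: "C \<in> borel_measurable P" unfolding C_def by measurable
  have iCP: "integrable P C" "integrable Q C" unfolding C_def
    using A AQ pP pQ by (auto intro!: integrable_real_indicator simp: prob_space_def finite_measure.emeasure_eq_measure)
  have EP: "(\<integral>x. C x \<partial>P) = t * p" unfolding C_def p_def using A
    by (simp add: Int_absorb1 sets.sets_into_space)
  have EQ: "(\<integral>x. C x \<partial>Q) = t * q" unfolding C_def q_def using AQ
    by (simp add: Int_absorb1 sets.sets_into_space)
  note IP = ind_int[OF pP A, of "\<lambda>s. f (t * s - t*q)"]
  note IQ = ind_int[OF pQ AQ, of "\<lambda>s. f (t*p - t * s)"]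
  have "(\<integral>x. f (C x - (\<integral>y. C y \<partial>Q)) \<partial>P) + (\<integral>y. f ((\<integral>x. C x \<partial>P) - C y) \<partial>Q) = g t"
    unfolding EP EQ using IP IQ by (simp add: C_def g_def p_def q_def algebra_simps)
  moreover have "C \<in> {C. C \<in> borel_measurable P \<and> integrable P C \<and> integrable Q C \<and>
                 integrable P (\<lambda>x. f (C x - (\<integral>y. C y \<partial>Q))) \<and>
                 integrable Q (\<lambda>y. f ((\<integral>x. C x \<partial>P) - C y))}"
    unfolding mem_Collect_eq EP EQ using Cm iCP IP IQ by (simp add: C_def)
  ultimately show ?case using t by (intro bexI[of _ C]) auto
qed



lemma DRalf_div:
  fixes f :: "real \<Rightarrow> real" and P Q :: "'a measure"
  assumes conc: "concave_on UNIV f" and f0: "f 0 = 0" and der: "(f has_real_derivative a) (at 0)"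
    and a0: "a \<noteq> 0" and fB: "\<And>x. f x \<le> B"
    and pP: "prob_space P" and pQ: "prob_space Q" and sPQ: "sets P = sets Q"
  shows "DRalf f P Q \<ge> 0 \<and> (DRalf f P Q = 0 \<longleftrightarrow> P = Q)"
  unfolding DRalf_def
proof (rule sup_div[where B = "2 * B" and cz = "\<lambda>x. 0"], goal_cases)
  case (1 C)
  have "(\<integral>x. f (C x - (\<integral>y. C y \<partial>Q)) \<partial>P) \<le> B"
    using 1 fB by (intro prob_space.integral_le_const[OF pP]) auto
  then show ?case by linarith
next
  case 2
  then show ?case using f0 by auto
next
  case 3
  then show ?case using f0 by auto
next
  case 4
  show ?case
  proof
    fix C assume C: "C \<in> {C. C \<in> borel_measurable P \<and> integrable Q C \<and>
                 integrable P (\<lambda>x. f (C x - (\<integral>y. C y \<partial>Q)))}"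
    define m where "m = (\<integral>x. C x \<partial>P)"
    have i1: "integrable P (\<lambda>x. f (C x - m))" and i2: "integrable P C"
      using C 4 by (auto simp: m_def)
    have i3: "integrable P (\<lambda>x. C x - m)"
      using i2 pP by (intro Bochner_Integration.integrable_diff) (auto simp: prob_space_def intro: finite_measure.integrable_const)
    have "(\<integral>x. f (C x - m) \<partial>P) \<le> (\<integral>x. a * (C x - m) \<partial>P)"
      using concave_tangent[OF conc f0 der] i1 i3 by (intro integral_mono) auto
    also have "\<dots> = a * ((\<integral>x. C x \<partial>P) - m)"
      using i2 i3 pP by (simp add: prob_space.prob_space Bochner_Integration.integral_diff[OF i2] finite_measure.integrable_const prob_space_def)
    also have "\<dots> = 0" by (simp add: m_def)
    finally show "2 * (\<integral>x. f (C x - (\<integral>y. C y \<partial>Q)) \<partial>P) \<le> 0"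
      using 4 by (simp add: m_def)
  qed
next
  case 5
  obtain A where A: "A \<in> sets P" and pq: "measure P A \<noteq> measure Q A"
    using meas_neq[OF pP pQ sPQ 5] by blast
  have AQ: "A \<in> sets Q" using A sPQ by simp
  define p where "p = measure P A"
  define q where "q = measure Q A"
  define g where "g t = 2 * (f ((-q)*t) + (f ((1-q)*t) - f ((-q)*t))*p)" for t
  have d1: "((\<lambda>t. f (k*t)) has_real_derivative (a*k)) (at 0)" for k using deriv_scale[OF der] .
  have "(g has_real_derivative (2 * (a*(-q) + (a*(1-q) - a*(-q))*p))) (at 0)"
    unfolding g_def
    by (intro DERIV_add DERIV_cmult DERIV_cmult_right DERIV_diff d1)
  moreover have "2 * (a*(-q) + (a*(1-q) - a*(-q))*p) = 2*a*(p-q)"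
    by (simp add: algebra_simps)
  moreover have "2*a*(p-q) \<noteq> 0" using a0 pq by (simp add: p_def q_def)
  moreover have "g 0 = 0" using f0 by (simp add: g_def)
  ultimately obtain t where t: "g t > 0" using pos_somewhere by metis
  define C where "C x = t * indicator A x" for x
  have [measurable]: "A \<in> sets P" by fact
  have Cm: "C \<in> borel_measurable P" unfolding C_def by measurable
  have iCP: "integrable P C" "integrable Q C" unfolding C_def
    using A AQ pP pQ by (auto intro!: integrable_real_indicator simp: prob_space_def finite_measure.emeasure_eq_measure)
  have EQ: "(\<integral>x. C x \<partial>Q) = t * q" unfolding C_def q_def using AQ
    by (simp add: Int_absorb1 sets.sets_into_space)
  note IP = ind_int[OF pP A, of "\<lambda>s. f (t * s - t * q)"]
  have "2 * (\<integral>x. f (C x - (\<integral>y. C y \<partial>Q)) \<partial>P) = g t"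
    unfolding EQ using IP by (simp add: C_def g_def p_def q_def algebra_simps)
  moreover have "C \<in> {C. C \<in> borel_measurable P \<and> integrable Q C \<and>
                 integrable P (\<lambda>x. f (C x - (\<integral>y. C y \<partial>Q)))}"
    unfolding mem_Collect_eq EQ using Cm iCP IP by (simp add: C_def)
  ultimately show ?case using t by (intro bexI[of _ C]) auto
qed

lemma DRc_div:
  fixes f :: "real \<Rightarrow> real" and P Q :: "'a measure"
  assumes conc: "concave_on UNIV f" and f0: "f 0 = 0" and der: "(f has_real_derivative a) (at 0)"
    and a0: "a \<noteq> 0" and fB: "\<And>x. f x \<le> B"
    and pP: "prob_space P" and pQ: "prob_space Q" and sPQ: "sets P = sets Q"
  shows "DRc f P Q \<ge> 0 \<and> (DRc f P Q = 0 \<longleftrightarrow> P = Q)"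
  unfolding DRc_def
proof (rule sup_div[where B = "B + B" and cz = "\<lambda>x. 0"], goal_cases)
  case (1 C)
  have "(\<integral>x. f (C x - mix_mean P Q C) \<partial>P) \<le> B"
    using 1 fB by (intro prob_space.integral_le_const[OF pP]) auto
  moreover have "(\<integral>y. f (mix_mean P Q C - C y) \<partial>Q) \<le> B"
    using 1 fB by (intro prob_space.integral_le_const[OF pQ]) auto
  ultimately show ?case by linarith
next
  case 2
  then show ?case using f0 by (auto simp: mix_mean_def)
next
  case 3
  then show ?case using f0 by (auto simp: mix_mean_def)
next
  case 4
  show ?case
  proof
    fix C assume C: "C \<in> {C. C \<in> borel_measurable P \<and> integrable P C \<and> integrable Q C \<and>
                 integrable P (\<lambda>x. f (C x - mix_mean P Q C)) \<and>
                 integrable Q (\<lambda>y. f (mix_mean P Q C - C y))}"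
    define m where "m = (\<integral>x. C x \<partial>P)"
    have mm: "mix_mean P Q C = m" using 4 by (simp add: mix_mean_def m_def)
    have i1: "integrable P (\<lambda>x. f (C x - m))" and i2: "integrable P (\<lambda>x. f (m - C x))"
      using C 4 mm by auto
    have "(\<integral>x. f (C x - m) \<partial>P) + (\<integral>x. f (m - C x) \<partial>P) = (\<integral>x. f (C x - m) + f (m - C x) \<partial>P)"
      using i1 i2 by simp
    also have "\<dots> \<le> 0"
      using concave_sym[OF conc f0, of "C _ - m"]
      by (intro prob_space.integral_le_const[OF pP]) (use i1 i2 in auto)
    finally show "(\<integral>x. f (C x - mix_mean P Q C) \<partial>P) + (\<integral>y. f (mix_mean P Q C - C y) \<partial>Q) \<le> 0"
      using 4 mm by simp
  qed
next
  case 5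
  obtain A where A: "A \<in> sets P" and pq: "measure P A \<noteq> measure Q A"
    using meas_neq[OF pP pQ sPQ 5] by blast
  have AQ: "A \<in> sets Q" using A sPQ by simp
  define p where "p = measure P A"
  define q where "q = measure Q A"
  define r where "r = (p + q) / 2"
  define g where "g t = f ((-r)*t) + (f ((1-r)*t) - f ((-r)*t))*p + f (r*t) + (f ((r-1)*t) - f (r*t))*q" for t
  have d1: "((\<lambda>t. f (k*t)) has_real_derivative (a*k)) (at 0)" for k using deriv_scale[OF der] .
  have "(g has_real_derivative (a*(-r) + (a*(1-r) - a*(-r))*p + a*r + (a*(r-1) - a*r)*q)) (at 0)"
    unfolding g_def
    by (intro DERIV_add DERIV_cmult_right DERIV_diff d1)
  moreover have "a*(-r) + (a*(1-r) - a*(-r))*p + a*r + (a*(r-1) - a*r)*q = a*(p-q)"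
    by (simp add: algebra_simps)
  moreover have "a*(p-q) \<noteq> 0" using a0 pq by (simp add: p_def q_def)
  moreover have "g 0 = 0" using f0 by (simp add: g_def)
  ultimately obtain t where t: "g t > 0" using pos_somewhere by metis
  define C where "C x = t * indicator A x" for x
  have [measurable]: "A \<in> sets P" by fact
  have Cm: "C \<in> borel_measurable P" unfolding C_def by measurable
  have iCP: "integrable P C" "integrable Q C" unfolding C_def
    using A AQ pP pQ by (auto intro!: integrable_real_indicator simp: prob_space_def finite_measure.emeasure_eq_measure)
  have EP: "(\<integral>x. C x \<partial>P) = t * p" unfolding C_def p_def using A
    by (simp add: Int_absorb1 sets.sets_into_space)
  have EQ: "(\<integral>x. C x \<partial>Q) = t * q" unfolding C_def q_def using AQ
    by (simp add: Int_absorb1 sets.sets_into_space)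
  have MM: "mix_mean P Q C = t * r" unfolding mix_mean_def EP EQ r_def by (simp add: algebra_simps)
  note IP = ind_int[OF pP A, of "\<lambda>s. f (t * s - t * r)"]
  note IQ = ind_int[OF pQ AQ, of "\<lambda>s. f (t * r - t * s)"]
  have "(\<integral>x. f (C x - mix_mean P Q C) \<partial>P) + (\<integral>y. f (mix_mean P Q C - C y) \<partial>Q) = g t"
    unfolding MM using IP IQ by (simp add: C_def g_def p_def q_def algebra_simps)
  moreover have "C \<in> {C. C \<in> borel_measurable P \<and> integrable P C \<and> integrable Q C \<and>
                 integrable P (\<lambda>x. f (C x - mix_mean P Q C)) \<and>
                 integrable Q (\<lambda>y. f (mix_mean P Q C - C y))}"
    unfolding mem_Collect_eq MM using Cm iCP IP IQ by (simp add: C_def)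
  ultimately show ?case using t by (intro bexI[of _ C]) auto
qed



lemma DRp_div:
  fixes f :: "real \<Rightarrow> real" and P Q :: "'a measure"
  assumes conc: "concave_on UNIV f" and f0: "f 0 = 0" and der: "(f has_real_derivative a) (at 0)"
    and a0: "a \<noteq> 0" and fB: "\<And>x. f x \<le> B"
    and pP: "prob_space P" and pQ: "prob_space Q" and sPQ: "sets P = sets Q"
  shows "DRp f P Q \<ge> 0 \<and> (DRp f P Q = 0 \<longleftrightarrow> P = Q)"
  unfolding DRp_def
proof (rule sup_div[where B = "2 * B" and cz = "\<lambda>x. 0"], goal_cases)
  case (1 C)
  have ppq: "prob_space (P \<Otimes>\<^sub>M Q)" using pP pQ by (rule prob_space_pair)
  have "(\<integral>(x,y). f (C x - C y) \<partial>(P \<Otimes>\<^sub>M Q)) \<le> B"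
    using 1 fB by (intro prob_space.integral_le_const[OF ppq]) (auto split: prod.split)
  then show ?case by linarith
next
  case 2
  have ppq: "prob_space (P \<Otimes>\<^sub>M Q)" using pP pQ by (rule prob_space_pair)
  then show ?case using f0 by (simp add: case_prod_unfold)
next
  case 3
  then show ?case using f0 by (simp add: case_prod_unfold)
next
  case 4
  interpret PP: pair_sigma_finite P P
    using pP by (intro pair_sigma_finite.intro prob_space_imp_sigma_finite)
  show ?case
  proof
    fix C assume C: "C \<in> {C. C \<in> borel_measurable P \<and>
                 integrable (P \<Otimes>\<^sub>M Q) (\<lambda>(x, y). f (C x - C y))}"
    define h where "h = (\<lambda>(x, y). f (C x - C y))"
    have ih: "integrable (P \<Otimes>\<^sub>M P) h" using C 4 by (simp add: h_def)
    have hm: "h \<in> borel_measurable (P \<Otimes>\<^sub>M P)" using ih by (rule borel_measurable_integrable)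
    have sw: "(\<integral>(x,y). h (y,x) \<partial>(P \<Otimes>\<^sub>M P)) = integral\<^sup>L (P \<Otimes>\<^sub>M P) h"
      using PP.integral_product_swap[OF hm] .
    have isw: "integrable (P \<Otimes>\<^sub>M P) (\<lambda>(x,y). h (y,x))"
      using PP.integrable_product_swap[OF ih] .
    have "2 * integral\<^sup>L (P \<Otimes>\<^sub>M P) h = integral\<^sup>L (P \<Otimes>\<^sub>M P) h + (\<integral>(x,y). h (y,x) \<partial>(P \<Otimes>\<^sub>M P))"
      using sw by simp
    also have "\<dots> = (\<integral>z. h z + (\<lambda>(x,y). h (y,x)) z \<partial>(P \<Otimes>\<^sub>M P))"
      using ih isw by (subst Bochner_Integration.integral_add) auto
    also have "\<dots> \<le> 0"
    proof (intro prob_space.integral_le_const[OF prob_space_pair[OF pP pP]])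
      show "integrable (P \<Otimes>\<^sub>M P) (\<lambda>z. h z + (\<lambda>(x,y). h (y,x)) z)" using ih isw by auto
      show "AE z in P \<Otimes>\<^sub>M P. h z + (\<lambda>(x,y). h (y,x)) z \<le> 0"
      proof (rule AE_I2)
        fix z :: "'a \<times> 'a"
        obtain x y where z: "z = (x, y)" by (cases z)
        show "h z + (\<lambda>(x,y). h (y,x)) z \<le> 0"
          using concave_sym[OF conc f0, of "C x - C y"] by (simp add: h_def z)
      qed
    qed
    finally show "2 * (\<integral>(x,y). f (C x - C y) \<partial>(P \<Otimes>\<^sub>M Q)) \<le> 0" using 4 by (simp add: h_def)
  qed
next
  case 5
  obtain A where A: "A \<in> sets P" and pq: "measure P A \<noteq> measure Q A"
    using meas_neq[OF pP pQ sPQ 5] by blast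
  define p where "p = measure P A"
  define q where "q = measure Q A"
  define g where "g t = 2 * (f t * (p * (1 - q)) + f ((-1)*t) * ((1 - p) * q))" for t
  have d1: "((\<lambda>t. f (k*t)) has_real_derivative (a*k)) (at 0)" for k using deriv_scale[OF der] .
  have "(g has_real_derivative (2 * (a * (p * (1 - q)) + (a*(-1)) * ((1 - p) * q)))) (at 0)"
    unfolding g_def
    by (intro DERIV_add DERIV_cmult DERIV_cmult_right d1 der)
  moreover have "2 * (a * (p * (1 - q)) + (a*(-1)) * ((1 - p) * q)) = 2*a*(p-q)"
    by (simp add: algebra_simps)
  moreover have "2*a*(p-q) \<noteq> 0" using a0 pq by (simp add: p_def q_def)
  moreover have "g 0 = 0" using f0 by (simp add: g_def)
  ultimately obtain t where t: "g t > 0" using pos_somewhere by metis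
  define C where "C x = t * indicator A x" for x
  have [measurable]: "A \<in> sets P" by fact
  have Cm: "C \<in> borel_measurable P" unfolding C_def by measurable
  note I = pair_ind[OF pP pQ sPQ A, of "\<lambda>s u. f (t * s - t * u)"]
  have I': "integrable (P \<Otimes>\<^sub>M Q) (\<lambda>(x,y). f (C x - C y)) \<and>
    (\<integral>(x,y). f (C x - C y) \<partial>(P \<Otimes>\<^sub>M Q)) = f t * (p * (1 - q)) + f (- t) * ((1 - p) * q)"
    unfolding C_def p_def q_def using I f0 by simp
  have "2 * (\<integral>(x,y). f (C x - C y) \<partial>(P \<Otimes>\<^sub>M Q)) = g t"
    using I' by (simp add: g_def)
  moreover have "C \<in> {C. C \<in> borel_measurable P \<and>
                 integrable (P \<Otimes>\<^sub>M Q) (\<lambda>(x, y). f (C x - C y))}"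
    using Cm I' by simp
  ultimately show ?case using t by (intro bexI[of _ C]) auto
qed


theorem theorem3p1:
  fixes f :: "real \<Rightarrow> real" and X :: "'a measure"
  assumes "concave_on UNIV f"
    and "f 0 = 0"
    and "f differentiable (at 0)"
    and "deriv f 0 \<noteq> 0"
    and "bdd_above (range f)"
    and "(SUP x. f x) > 0"
    and "(\<exists>x>0. f x = (SUP t. f t)) \<or> (f \<longlongrightarrow> (SUP t. f t)) at_top"
  shows "is_divergence_on X (DRp f) \<and> is_divergence_on X (DRa f) \<and>
         is_divergence_on X (DRalf f) \<and> is_divergence_on X (DRc f)"
proof -
  have der: "(f has_real_derivative (deriv f 0)) (at 0)"
    using assms(3) by (simp add: DERIV_deriv_iff_real_differentiable)
  have fB: "\<And>x. f x \<le> (SUP t. f t)"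
    using assms(5) by (intro cSUP_upper) auto
  note D = DRp_div[OF assms(1,2) der assms(4) fB] DRa_div[OF assms(1,2) der assms(4) fB]
      DRalf_div[OF assms(1,2) der assms(4) fB] DRc_div[OF assms(1,2) der assms(4) fB]
  show ?thesis
    unfolding is_divergence_on_def
    by (intro conjI allI impI; simp add: D)
qed

end
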